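(* Let $1\le k\le d\le n-1$, $h=1$, $\beta=\frac{2M}{k(2d-k+3)}$ (assumed a positive integer), $\alpha=(d+1)\beta$ and $\alpha'=k\beta$. Then, over a sufficiently large finite field, there exist linear codes for $\mathrm{DSS}(n,k,d,1,\alpha,\alpha',\beta,M)$ such that when each of the $d$ surviving complete nodes and the repairing storage node transmits $\beta$ packets to the new node, the reconstruction property (any $k$ complete nodes recover the file) is maintained under failures/repairs.
   Context: $\mathrm{DSS}(n,k,d,h,\alpha,\alpha',\beta,M)$: a file of $M$ packets over $\mathrm{GF}(q)$ is stored on $n$ complete storage nodes of capacity $\alpha$ each (each storing linear combinations of the file packets) so that any $k$ of them reconstruct the file; in addition there are $h$ repairing storage nodes of capacity $\alpha'<\alpha$, which never fail and are never contacted by data collectors. When a complete node fails, a new node is created from $\beta$ packets (linear combinations of stored data) received from each of $d$ surviving complete nodes and from each of the $h$ repairing nodes; repair is functional. *)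

theory Defs
  imports "HOL-Algebra.Ring"
begin

text \<open>A node storing a packets is given by an a x M coefficient matrix G
  (function nat => nat => 'b, only indices r < a, c < M matter);
  its r-th stored packet is the linear combination stored F M G r x.\<close>

definition stored :: "('b, 'm) ring_scheme \<Rightarrow> nat \<Rightarrow> (nat \<Rightarrow> nat \<Rightarrow> 'b) \<Rightarrow> nat \<Rightarrow> (nat \<Rightarrow> 'b) \<Rightarrow> 'b" where
  "stored F M G r x = finsum F (\<lambda>c. G r c \<otimes>\<^bsub>F\<^esub> x c) {..<M}"

definition is_vec :: "('b, 'm) ring_scheme \<Rightarrow> nat \<Rightarrow> (nat \<Rightarrow> 'b) \<Rightarrow> bool" where
  "is_vec F M x \<longleftrightarrow> (\<forall>c<M. x c \<in> carrier F)"

definition is_mat :: "('b, 'm) ring_scheme \<Rightarrow> nat \<Rightarrow> nat \<Rightarrow> (nat \<Rightarrow> nat \<Rightarrow> 'b) \<Rightarrow> bool" where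
  "is_mat F a b G \<longleftrightarrow> (\<forall>r<a. \<forall>c<b. G r c \<in> carrier F)"

definition recovers :: "('b, 'm) ring_scheme \<Rightarrow> nat \<Rightarrow> nat \<Rightarrow> (nat \<Rightarrow> nat \<Rightarrow> nat \<Rightarrow> 'b) \<Rightarrow> nat set \<Rightarrow> bool" where
  "recovers F M \<alpha> N K \<longleftrightarrow>
     (\<forall>x y. is_vec F M x \<longrightarrow> is_vec F M y \<longrightarrow>
        (\<forall>i\<in>K. \<forall>r<\<alpha>. stored F M (N i) r x = stored F M (N i) r y) \<longrightarrow>
        (\<forall>c<M. x c = y c))"

text \<open>Coefficients used in one repair:
  hB j s r : helper complete node j sends as its s-th packet (s < beta)
             the combination of its stored packets r < alpha;
  rB s r   : the repairing node sends as its s-th packet (s < beta)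
             the combination of its stored packets r < alpha';
  hC t j s, rC t s : the new node's t-th packet (t < alpha) is the
             combination of all received packets.\<close>
record 'b repair_coeffs =
  hB :: "nat \<Rightarrow> nat \<Rightarrow> nat \<Rightarrow> 'b"
  rB :: "nat \<Rightarrow> nat \<Rightarrow> 'b"
  hC :: "nat \<Rightarrow> nat \<Rightarrow> nat \<Rightarrow> 'b"
  rC :: "nat \<Rightarrow> nat \<Rightarrow> 'b"

definition coeffs_ok :: "('b, 'm) ring_scheme \<Rightarrow> nat \<Rightarrow> nat \<Rightarrow> nat \<Rightarrow> nat set \<Rightarrow> 'b repair_coeffs \<Rightarrow> bool" where
  "coeffs_ok F \<alpha> \<alpha>' \<beta> D co \<longleftrightarrow>
     (\<forall>j\<in>D. \<forall>s<\<beta>. \<forall>r<\<alpha>. hB co j s r \<in> carrier F) \<and>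
     (\<forall>s<\<beta>. \<forall>r<\<alpha>'. rB co s r \<in> carrier F) \<and>
     (\<forall>t<\<alpha>. \<forall>j\<in>D. \<forall>s<\<beta>. hC co t j s \<in> carrier F) \<and>
     (\<forall>t<\<alpha>. \<forall>s<\<beta>. rC co t s \<in> carrier F)"

text \<open>Coefficient matrix (w.r.t. the file) of the newly created node, when the
  helpers D (complete nodes with matrices N j) and the repairing node (matrix R)
  send beta packets each, combined according to co.\<close>
definition repair_node :: "('b, 'm) ring_scheme \<Rightarrow> nat \<Rightarrow> nat \<Rightarrow> nat \<Rightarrow>
    (nat \<Rightarrow> nat \<Rightarrow> nat \<Rightarrow> 'b) \<Rightarrow> (nat \<Rightarrow> nat \<Rightarrow> 'b) \<Rightarrow> nat set \<Rightarrow> 'b repair_coeffs \<Rightarrow> (nat \<Rightarrow> nat \<Rightarrow> 'b)" where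
  "repair_node F \<alpha> \<alpha>' \<beta> N R D co = (\<lambda>t c.
     finsum F (\<lambda>j. finsum F (\<lambda>s. hC co t j s \<otimes>\<^bsub>F\<^esub>
                 finsum F (\<lambda>r. hB co j s r \<otimes>\<^bsub>F\<^esub> N j r c) {..<\<alpha>}) {..<\<beta>}) D
     \<oplus>\<^bsub>F\<^esub>
     finsum F (\<lambda>s. rC co t s \<otimes>\<^bsub>F\<^esub>
                 finsum F (\<lambda>r. rB co s r \<otimes>\<^bsub>F\<^esub> R r c) {..<\<alpha>'}) {..<\<beta>})"

text \<open>A failure/repair event (i, D): complete node i fails and the set D of
  surviving complete nodes are the helpers.\<close>
type_synonym event = "nat \<times> nat set"

definition valid_event :: "nat \<Rightarrow> nat \<Rightarrow> event \<Rightarrow> bool" where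
  "valid_event n d e \<longleftrightarrow> fst e < n \<and> snd e \<subseteq> {..<n} - {fst e} \<and> card (snd e) = d"

text \<open>State of the complete nodes after a sequence of events (oldest first).
  The repair strategy sigma may depend on the whole history of past events.\<close>
primrec run_rev :: "('b, 'm) ring_scheme \<Rightarrow> nat \<Rightarrow> nat \<Rightarrow> nat \<Rightarrow>
    (nat \<Rightarrow> nat \<Rightarrow> nat \<Rightarrow> 'b) \<Rightarrow> (nat \<Rightarrow> nat \<Rightarrow> 'b) \<Rightarrow>
    (event list \<Rightarrow> event \<Rightarrow> 'b repair_coeffs) \<Rightarrow> event list \<Rightarrow> (nat \<Rightarrow> nat \<Rightarrow> nat \<Rightarrow> 'b)" where
  "run_rev F \<alpha> \<alpha>' \<beta> N0 R \<sigma> [] = N0"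
| "run_rev F \<alpha> \<alpha>' \<beta> N0 R \<sigma> (e # es) =
     (let N = run_rev F \<alpha> \<alpha>' \<beta> N0 R \<sigma> es
      in N(fst e := repair_node F \<alpha> \<alpha>' \<beta> N R (snd e) (\<sigma> (rev es) e)))"

definition run :: "('b, 'm) ring_scheme \<Rightarrow> nat \<Rightarrow> nat \<Rightarrow> nat \<Rightarrow>
    (nat \<Rightarrow> nat \<Rightarrow> nat \<Rightarrow> 'b) \<Rightarrow> (nat \<Rightarrow> nat \<Rightarrow> 'b) \<Rightarrow>
    (event list \<Rightarrow> event \<Rightarrow> 'b repair_coeffs) \<Rightarrow> event list \<Rightarrow> (nat \<Rightarrow> nat \<Rightarrow> nat \<Rightarrow> 'b)" where
  "run F \<alpha> \<alpha>' \<beta> N0 R \<sigma> es = run_rev F \<alpha> \<alpha>' \<beta> N0 R \<sigma> (rev es)"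

end

theory Submission
  imports Defs "HOL-Algebra.Polynomial_Divisibility"
begin


lemma (in domain) roots_card_le:
  assumes "p \<in> carrier (poly_ring R)" and "p \<noteq> []"
  shows "card { x. is_root p x } \<le> degree p"
  using assms
proof (induction "degree p" arbitrary: p)
  case 0 thus ?case
    by (simp add: degree_zero_imp_not_is_root)
next
  case (Suc n) show ?case
  proof (cases "{ x. is_root p x } = {}")
    case True thus ?thesis
      by (simp add: True) 
  next
    interpret UP: domain "poly_ring R"
      using univ_poly_is_domain[OF carrier_is_subring] .
    case False
    then obtain a where is_root: "is_root p a"
      by blast
    hence a: "a \<in> carrier R" and eval: "eval p a = \<zero>" and p_not_zero: "p \<noteq> []"
      unfolding is_root_def by auto
    hence in_carrier: "[ \<one>, \<ominus> a ] \<in> carrier (poly_ring R)"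
      unfolding sym[OF univ_poly_carrier] polynomial_def by auto
    obtain q where q: "q \<in> carrier (poly_ring R)" and p: "p = [ \<one>, \<ominus> a ] \<otimes>\<^bsub>poly_ring R\<^esub> q"
      using is_root_imp_pdivides[OF Suc(3) is_root] unfolding pdivides_def by auto
    with \<open>p \<noteq> []\<close> have q_not_zero: "q \<noteq> []"
      using UP.r_null UP.integral in_carrier unfolding sym[OF univ_poly_zero[of R "carrier R"]]
      by metis
    hence "degree q = n"
      using poly_mult_degree_eq[OF carrier_is_subring, of "[ \<one>, \<ominus> a ]" q]
            in_carrier q p_not_zero p Suc(2)
      unfolding univ_poly_carrier
      by (metis One_nat_def Suc_eq_plus1 diff_Suc_1 list.distinct(1)
                list.size(3-4) plus_1_eq_Suc univ_poly_mult)
    hence c: "card { x. is_root q x } \<le> n"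
      using Suc(1)[OF _ q q_not_zero] by simp
    have fin: "finite { x. is_root q x }" using finite_number_of_roots[OF q] .
    have "{ x. is_root p x } \<subseteq> insert a { x. is_root q x }"
      using is_root_poly_mult_imp_is_root[OF in_carrier q]
            monic_degree_one_root_condition[OF a]
      unfolding p by auto
    hence "card { x. is_root p x } \<le> card (insert a { x. is_root q x })"
      using fin by (simp add: card_mono)
    also have "\<dots> \<le> Suc n" using c fin by (simp add: card_insert_if)
    finally show ?thesis using Suc(2) by simp
  qed
qed




context cring begin

definition ev :: "(nat \<Rightarrow> 'a) \<Rightarrow> nat \<Rightarrow> 'a \<Rightarrow> 'a" where
  "ev g N x = (\<Oplus>a\<in>{..<N}. g a \<otimes> x [^] a)"

lemma ev_closed: "(\<And>a. a < N \<Longrightarrow> g a \<in> carrier R) \<Longrightarrow> x \<in> carrier R \<Longrightarrow> ev g N x \<in> carrier R"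
  unfolding ev_def by (intro finsum_closed) auto

lemma ev_Suc: "(\<And>a. a \<le> N \<Longrightarrow> g a \<in> carrier R) \<Longrightarrow> x \<in> carrier R \<Longrightarrow>
   ev g (Suc N) x = g N \<otimes> x [^] N \<oplus> ev g N x"
  unfolding ev_def lessThan_Suc
  by (subst finsum_insert) auto

lemma ev_cong: "(\<And>a. a < N \<Longrightarrow> g a = h a) \<Longrightarrow> (\<And>a. a < N \<Longrightarrow> h a \<in> carrier R) \<Longrightarrow> x \<in> carrier R \<Longrightarrow> ev g N x = ev h N x"
  unfolding ev_def by (intro finsum_cong') auto

lemma eval_eq_ev_aux:
  assumes "set p \<subseteq> carrier R" "x \<in> carrier R"
  shows "eval p x = ev (coeff p) (length p) x"
  using assms(1)
proof (induction p)
  case Nil thus ?case by (simp add: ev_def)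
next
  case (Cons c q)
  have cq: "\<And>i. coeff q i \<in> carrier R" using Cons by auto
  have "ev (coeff (c # q)) (Suc (length q)) x = coeff (c#q) (length q) \<otimes> x [^] length q \<oplus> ev (coeff (c#q)) (length q) x"
    using Cons(2) assms(2) by (subst ev_Suc) (auto simp: cq)
  also have "ev (coeff (c#q)) (length q) x = ev (coeff q) (length q) x"
    by (rule ev_cong) (use cq assms(2) in auto)
  finally show ?case using Cons by simp
qed

lemma eval_eq_ev:
  assumes "set p \<subseteq> carrier R" "x \<in> carrier R" "length p \<le> N"
  shows "eval p x = ev (coeff p) N x"
  using assms(3)
proof (induction N)
  case 0 thus ?case using eval_eq_ev_aux[OF assms(1,2)] by simp
next
  case (Suc N)
  show ?case
  proof (cases "length p = Suc N")
    case True thus ?thesis using eval_eq_ev_aux[OF assms(1,2)] by simp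
  next
    case False
    hence "length p \<le> N" using Suc by simp
    moreover have "coeff p N = \<zero>" using \<open>length p \<le> N\<close> coeff_length by simp
    moreover have "ev (coeff p) N x \<in> carrier R" using assms by (intro ev_closed) auto
    ultimately show ?thesis using Suc assms by (subst ev_Suc) auto
  qed
qed

lemma ev_diff:
  assumes "\<And>a. g a \<in> carrier R" "\<And>a. h a \<in> carrier R" "x \<in> carrier R"
  shows "ev (\<lambda>a. g a \<ominus> h a) N x = ev g N x \<ominus> ev h N x"
proof (induction N)
  case 0 thus ?case by (simp add: ev_def a_minus_def)
next
  case (Suc N)
  have c: "ev g N x \<in> carrier R" "ev h N x \<in> carrier R" "x [^] N \<in> carrier R" "g N \<in> carrier R" "h N \<in> carrier R"
    using assms by (auto intro: ev_closed)
  show ?case using assms Suc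
    apply (subst (1 2 3) ev_Suc)
    using c by (auto, algebra)
qed

end



context domain begin

lemma ev_roots_zero:
  assumes w: "\<And>a. w a \<in> carrier R" and S: "S \<subseteq> carrier R" "finite S" "m \<le> card S"
    and ev0: "\<And>x. x \<in> S \<Longrightarrow> ev w N x = \<zero>"
    and hi: "\<And>a. m \<le> a \<Longrightarrow> a < N \<Longrightarrow> w a = \<zero>"
    and aN: "a < N"
  shows "w a = \<zero>"
proof -
  define L where "L = rev (map w [0..<N])"
  have Lc: "set L \<subseteq> carrier R" using w unfolding L_def by auto
  have lenL: "length L = N" unfolding L_def by simp
  have cL: "coeff L i = w i" if "i < N" for i
  proof -
    have "coeff L i = L ! (N - 1 - i)" using coeff_nth[of i L] lenL that by simp
    also have "\<dots> = w i" unfolding L_def using that by (simp add: rev_nth)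
    finally show ?thesis .
  qed
  have evL: "eval L x = ev w N x" if "x \<in> carrier R" for x
    using eval_eq_ev[OF Lc that, of N] lenL cL w that
    by (metis ev_cong order_refl)
  define P where "P = normalize L"
  have Pc: "P \<in> carrier (poly_ring R)"
    using normalize_gives_polynomial[OF Lc] unfolding P_def univ_poly_carrier .
  have cP: "coeff P = coeff L" unfolding P_def by (rule normalize_coeff[symmetric])
  have "P = []"
  proof (rule ccontr)
    assume Pne: "P \<noteq> []"
    have "lead_coeff P \<noteq> \<zero>"
      using Pc Pne unfolding sym[OF univ_poly_carrier] polynomial_def by auto
    hence "coeff L (degree P) \<noteq> \<zero>" using lead_coeff_simp[OF Pne] cP by simp
    hence dP: "degree P < m"
      using hi coeff_length[of L] lenL cL by (metis not_le)
    have "S \<subseteq> {x. is_root P x}"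
      using S(1) ev0 evL Pne eval_normalize[OF Lc] unfolding is_root_def P_def by auto
    hence "card S \<le> card {x. is_root P x}"
      using finite_number_of_roots[OF Pc] by (simp add: card_mono)
    also have "\<dots> \<le> degree P" by (rule roots_card_le[OF Pc Pne])
    finally show False using dP S(3) by simp
  qed
  hence "coeff L a = \<zero>" using cP by (metis coeff.simps(1))
  thus ?thesis using cL aN by simp
qed

lemma ev_roots_eq:
  assumes g: "\<And>a. g a \<in> carrier R" and h: "\<And>a. h a \<in> carrier R"
    and S: "S \<subseteq> carrier R" "finite S" "m \<le> card S"
    and ev0: "\<And>x. x \<in> S \<Longrightarrow> ev g N x = ev h N x"
    and hi: "\<And>a. m \<le> a \<Longrightarrow> a < N \<Longrightarrow> g a = h a"
    and aN: "a < N"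
  shows "g a = h a"
proof -
  have "g a \<ominus> h a = \<zero>"
  proof (rule ev_roots_zero[of "\<lambda>a. g a \<ominus> h a" S m N a])
    show "\<And>a. g a \<ominus> h a \<in> carrier R" using g h by auto
    show "\<And>x. x \<in> S \<Longrightarrow> ev (\<lambda>a. g a \<ominus> h a) N x = \<zero>"
    proof -
      fix x assume x: "x \<in> S"
      hence xc: "x \<in> carrier R" using S by auto
      have "ev (\<lambda>a. g a \<ominus> h a) N x = ev g N x \<ominus> ev h N x"
        using ev_diff[of g h x N] g h xc by blast
      also have "\<dots> = \<zero>" using ev0[OF x] ev_closed[of N h x] h xc by (simp add: r_right_minus_eq)
      finally show "ev (\<lambda>a. g a \<ominus> h a) N x = \<zero>" .
    qed
    show "\<And>a. m \<le> a \<Longrightarrow> a < N \<Longrightarrow> g a \<ominus> h a = \<zero>"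
      using hi h by (simp add: r_right_minus_eq)
  qed (use S aN in auto)
  thus ?thesis using g h r_right_minus_eq by blast
qed

end



primrec (in ring) prodlin :: "'a list \<Rightarrow> 'a list" where
  "prodlin [] = [\<one>]"
| "prodlin (a # as) = poly_mult [\<one>, \<ominus> a] (prodlin as)"

context domain begin

lemma prodlin_poly: "set as \<subseteq> carrier R \<Longrightarrow> polynomial (carrier R) (prodlin as)"
proof (induction as)
  case Nil thus ?case using one_is_polynomial[OF carrier_is_subring] by simp
next
  case (Cons a as)
  have "polynomial (carrier R) [\<one>, \<ominus> a]" using Cons(2) unfolding polynomial_def by auto
  thus ?case using Cons poly_mult_closed[OF carrier_is_subring] by (simp del: poly_mult.simps)
qed

lemma prodlin_len: "set as \<subseteq> carrier R \<Longrightarrow> length (prodlin as) \<le> Suc (length as)"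
proof (induction as)
  case Nil thus ?case by simp
next
  case (Cons a as)
  have p1: "polynomial (carrier R) [\<one>, \<ominus> a]" using Cons(2) unfolding polynomial_def by auto
  have p2: "polynomial (carrier R) (prodlin as)" using Cons(2) prodlin_poly by auto
  have "degree (prodlin (a # as)) \<le> Suc (degree (prodlin as))"
    using poly_mult_degree_eq[OF carrier_is_subring p1 p2] by (auto simp del: poly_mult.simps)
  moreover have "length (prodlin (a#as)) \<le> Suc (degree (prodlin (a#as)))" by simp
  ultimately show ?case using Cons by simp
qed

lemma prodlin_eval: "set as \<subseteq> carrier R \<Longrightarrow> x \<in> carrier R \<Longrightarrow>
    eval (prodlin as) x = \<zero> \<longleftrightarrow> x \<in> set as"
proof (induction as)
  case Nil thus ?case by simp
next
  case (Cons a as)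
  have c1: "set [\<one>, \<ominus> a] \<subseteq> carrier R" using Cons by auto
  have c2: "set (prodlin as) \<subseteq> carrier R" using prodlin_poly Cons(2) polynomial_incl by auto
  have e1: "eval [\<one>, \<ominus> a] x = x \<ominus> a" using Cons by (simp add: minus_eq)
  have "eval (prodlin (a # as)) x = (x \<ominus> a) \<otimes> eval (prodlin as) x"
    using eval_poly_mult[OF c1 c2 Cons(3)] e1 by (simp del: poly_mult.simps)
  moreover have "eval (prodlin as) x \<in> carrier R" using eval_in_carrier[OF c2 Cons(3)] .
  moreover have "x \<ominus> a = \<zero> \<longleftrightarrow> x = a" using Cons by (simp add: r_right_minus_eq)
  ultimately show ?case using Cons integral_iff by auto
qed

lemma ev_scale: "(\<And>a. g a \<in> carrier R) \<Longrightarrow> c \<in> carrier R \<Longrightarrow> x \<in> carrier R \<Longrightarrow>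
   ev (\<lambda>a. g a \<otimes> c) N x = ev g N x \<otimes> c"
  unfolding ev_def
  by (subst finsum_ldistr) (auto intro!: finsum_cong' simp: m_ac)

end

context field begin

lemma lagrange:
  fixes D :: "nat set"
  assumes D: "finite D" "inj_on pt D" "pt ` D \<subseteq> carrier R" and j: "j \<in> D"
  shows "\<exists>l. (\<forall>a. l a \<in> carrier R) \<and> (\<forall>i\<in>D. ev l (card D) (pt i) = (if i = j then \<one> else \<zero>))"
proof -
  define as where "as = map pt (sorted_list_of_set (D - {j}))"
  have asc: "set as \<subseteq> carrier R" using D unfolding as_def by auto
  have setas: "set as = pt ` (D - {j})" using D unfolding as_def by auto
  have lenas: "length as = card D - 1" using D j unfolding as_def by simp
  define q where "q = prodlin as"
  have qc: "set q \<subseteq> carrier R" using prodlin_poly[OF asc] polynomial_incl unfolding q_def by auto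
  have lenq: "length q \<le> card D" using prodlin_len[OF asc] lenas D j unfolding q_def
    by (metis One_nat_def Suc_pred card_gt_0_iff empty_iff)
  have ptj: "pt j \<in> carrier R" using D j by auto
  have "pt j \<notin> set as" using setas D j by (auto simp: inj_on_def)
  hence c0: "eval q (pt j) \<noteq> \<zero>" using prodlin_eval[OF asc ptj] unfolding q_def by simp
  define c where "c = eval q (pt j)"
  have cc: "c \<in> carrier R" using eval_in_carrier[OF qc ptj] unfolding c_def .
  have cU: "c \<in> Units R" using c0 cc field_Units unfolding c_def by auto
  define l where "l = (\<lambda>a. coeff q a \<otimes> inv c)"
  have ic: "inv c \<in> carrier R" using cU by auto
  have lc: "\<forall>a. l a \<in> carrier R" unfolding l_def using qc ic by auto
  have "ev l (card D) (pt i) = (if i = j then \<one> else \<zero>)" if i: "i \<in> D" for i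
  proof -
    have pti: "pt i \<in> carrier R" using D i by auto
    have "ev l (card D) (pt i) = ev (coeff q) (card D) (pt i) \<otimes> inv c"
      unfolding l_def using qc ic pti by (intro ev_scale) auto
    also have "ev (coeff q) (card D) (pt i) = eval q (pt i)"
      using eval_eq_ev[OF qc pti lenq] by simp
    finally have e: "ev l (card D) (pt i) = eval q (pt i) \<otimes> inv c" .
    show ?thesis
    proof (cases "i = j")
      case True thus ?thesis using e cU unfolding c_def by simp
    next
      case False
      hence "pt i \<in> set as" using setas i by auto
      hence "eval q (pt i) = \<zero>" using prodlin_eval[OF asc pti] unfolding q_def by simp
      thus ?thesis using e False ic by simp
    qed
  qed
  thus ?thesis using lc by blast
qed

end



lemma (in abelian_monoid) finsum_swap:
  assumes "finite A" "finite B" "\<And>a b. a \<in> A \<Longrightarrow> b \<in> B \<Longrightarrow> f a b \<in> carrier G"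
  shows "(\<Oplus>a\<in>A. \<Oplus>b\<in>B. f a b) = (\<Oplus>b\<in>B. \<Oplus>a\<in>A. f a b)"
  using assms(1,3)
proof (induction A rule: finite_induct)
  case empty thus ?case by (simp add: finsum_zero[symmetric] del: finsum_zero)
next
  case (insert x F)
  have "(\<Oplus>a\<in>insert x F. \<Oplus>b\<in>B. f a b) = (\<Oplus>b\<in>B. f x b) \<oplus> (\<Oplus>a\<in>F. \<Oplus>b\<in>B. f a b)"
    using insert assms(2) by (subst finsum_insert) (auto intro!: finsum_closed)
  also have "\<dots> = (\<Oplus>b\<in>B. f x b) \<oplus> (\<Oplus>b\<in>B. \<Oplus>a\<in>F. f a b)" using insert by simp
  also have "\<dots> = (\<Oplus>b\<in>B. f x b \<oplus> (\<Oplus>a\<in>F. f a b))"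
    using insert assms(2) by (subst finsum_addf) (auto intro!: finsum_closed)
  also have "\<dots> = (\<Oplus>b\<in>B. \<Oplus>a\<in>insert x F. f a b)"
    using insert assms(2) by (intro finsum_cong') (auto intro!: finsum_closed)
  finally show ?case .
qed

context field begin

lemma interp:
  fixes D :: "nat set"
  assumes D: "finite D" "inj_on pt D" "pt ` D \<subseteq> carrier R" "card D = d"
  shows "\<exists>lam mu. (\<forall>j b. lam j b \<in> carrier R) \<and> (\<forall>b. mu b \<in> carrier R) \<and>
     (\<forall>g. (\<forall>a. g a \<in> carrier R) \<longrightarrow>
        (\<forall>b\<le>d. (\<Oplus>j\<in>D. lam j b \<otimes> ev g (Suc d) (pt j)) \<oplus> mu b \<otimes> g d = g b))"
proof -
  have "\<forall>j\<in>D. \<exists>l. (\<forall>a. l a \<in> carrier R) \<and> (\<forall>i\<in>D. ev l d (pt i) = (if i = j then \<one> else \<zero>))"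
    using lagrange[OF D(1-3)] D(4) by blast
  then obtain L where L: "\<And>j. j \<in> D \<Longrightarrow> (\<forall>a. L j a \<in> carrier R) \<and>
       (\<forall>i\<in>D. ev (L j) d (pt i) = (if i = j then \<one> else \<zero>))"
    by metis
  have Lc: "\<And>j a. j \<in> D \<Longrightarrow> L j a \<in> carrier R" using L by blast
  have pc: "\<And>j. j \<in> D \<Longrightarrow> pt j \<in> carrier R" using D by auto
  define lam where "lam = (\<lambda>j b. if b < d \<and> j \<in> D then L j b else \<zero>)"
  define XX where "XX = (\<lambda>b. \<Oplus>j\<in>D. L j b \<otimes> pt j [^] d)"
  have XXc: "XX b \<in> carrier R" for b unfolding XX_def using Lc pc D by (intro finsum_closed) auto
  define mu where "mu = (\<lambda>b. if b < d then \<ominus> XX b else \<one>)"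
  have lamc: "\<forall>j b. lam j b \<in> carrier R" unfolding lam_def using Lc by auto
  have muc: "\<forall>b. mu b \<in> carrier R" unfolding mu_def using XXc by auto
  have main: "(\<Oplus>j\<in>D. lam j b \<otimes> ev g (Suc d) (pt j)) \<oplus> mu b \<otimes> g d = g b"
    if g: "\<forall>a. g a \<in> carrier R" and b: "b \<le> d" for g b
  proof (cases "b = d")
    case True
    have "(\<Oplus>j\<in>D. lam j b \<otimes> ev g (Suc d) (pt j)) = (\<Oplus>j\<in>D. \<zero>)"
      using True g pc by (intro finsum_cong') (auto simp: lam_def ev_closed)
    thus ?thesis using True g by (simp add: mu_def)
  next
    case False
    hence bd: "b < d" using b by simp
    define y where "y = (\<lambda>j. ev g d (pt j))"
    have yc: "j \<in> D \<Longrightarrow> y j \<in> carrier R" for j unfolding y_def using g pc by (auto intro: ev_closed)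
    define Q where "Q = (\<lambda>a. \<Oplus>j\<in>D. L j a \<otimes> y j)"
    have Qc: "Q a \<in> carrier R" for a unfolding Q_def using Lc yc D by (intro finsum_closed) auto
    have evQ: "ev Q d (pt i) = ev g d (pt i)" if i: "i \<in> D" for i
    proof -
      have s1: "(\<Oplus>j\<in>D. L j a \<otimes> y j) \<otimes> pt i [^] a = (\<Oplus>j\<in>D. (L j a \<otimes> pt i [^] a) \<otimes> y j)" for a
        using Lc yc pc[OF i] D
        by (subst finsum_ldistr) (auto intro!: finsum_cong' simp: m_ac)
      have "ev Q d (pt i) = (\<Oplus>a\<in>{..<d}. \<Oplus>j\<in>D. (L j a \<otimes> pt i [^] a) \<otimes> y j)"
        unfolding ev_def Q_def
        using Lc yc pc[OF i] D s1
        by (intro finsum_cong') (auto intro!: finsum_closed)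
      also have "\<dots> = (\<Oplus>j\<in>D. \<Oplus>a\<in>{..<d}. (L j a \<otimes> pt i [^] a) \<otimes> y j)"
        using Lc yc pc[OF i] D by (intro finsum_swap) auto
      also have "\<dots> = (\<Oplus>j\<in>D. ev (L j) d (pt i) \<otimes> y j)"
        unfolding ev_def
        using Lc yc pc[OF i] D
        by (intro finsum_cong') (auto intro!: finsum_closed simp: finsum_ldistr)
      also have "\<dots> = (\<Oplus>j\<in>D. if i = j then y j else \<zero>)"
        using L yc i by (intro finsum_cong') auto
      also have "\<dots> = y i" using i D yc by (intro finsum_singleton) auto
      finally show ?thesis unfolding y_def .
    qed
    have Qg: "Q b = g b"
    proof (rule ev_roots_eq[of Q g "pt ` D" d d])
      show "card (pt ` D) \<ge> d" using D card_image[of pt D] by simp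
    qed (use Qc g D evQ bd in auto)
    have "(\<Oplus>j\<in>D. lam j b \<otimes> ev g (Suc d) (pt j)) = (\<Oplus>j\<in>D. (L j b \<otimes> pt j [^] d) \<otimes> g d \<oplus> L j b \<otimes> y j)"
      unfolding lam_def y_def using bd g Lc pc
      by (intro finsum_cong') (auto simp: ev_Suc ev_closed r_distr m_ac intro!: ev_closed)
    also have "\<dots> = XX b \<otimes> g d \<oplus> Q b"
      unfolding XX_def Q_def using g Lc pc yc D
      by (subst finsum_addf) (auto simp: finsum_ldistr)
    finally show ?thesis using bd Qg XXc Qc g unfolding mu_def by simp algebra
  qed
  show ?thesis using lamc muc main by blast
qed

end



context ring begin

lemma finsum_block:
  fixes s \<beta> D1 :: nat
  assumes s: "s < \<beta>" and D: "0 < D1" and H: "\<And>r. H r \<in> carrier R"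
  shows "(\<Oplus>r\<in>{..<D1 * \<beta>}. if r div D1 = s then H r else \<zero>) = (\<Oplus>b\<in>{..<D1}. H (s * D1 + b))"
proof -
  have img: "(\<lambda>b. s * D1 + b) ` {..<D1} \<subseteq> {..<D1 * \<beta>}"
  proof
    fix r assume "r \<in> (\<lambda>b. s * D1 + b) ` {..<D1}"
    then obtain b where b: "b < D1" "r = s * D1 + b" by auto
    have "Suc s * D1 \<le> \<beta> * D1" using s by (intro mult_le_mono1) simp
    hence "s * D1 + D1 \<le> \<beta> * D1" by simp
    thus "r \<in> {..<D1 * \<beta>}" using b by (simp add: mult.commute)
  qed
  have "(\<Oplus>r\<in>(\<lambda>b. s * D1 + b) ` {..<D1}. H r) = (\<Oplus>r\<in>{..<D1 * \<beta>}. if r div D1 = s then H r else \<zero>)"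
  proof (rule add.finprod_mono_neutral_cong_left[OF _ img])
    show "\<And>i. i \<in> {..<D1 * \<beta>} - (\<lambda>b. s * D1 + b) ` {..<D1} \<Longrightarrow> (if i div D1 = s then H i else \<zero>) = \<zero>"
    proof -
      fix i assume i: "i \<in> {..<D1 * \<beta>} - (\<lambda>b. s * D1 + b) ` {..<D1}"
      have "i div D1 \<noteq> s"
      proof
        assume e: "i div D1 = s"
        have "i = s * D1 + i mod D1" using e div_mult_mod_eq[of i D1] by simp
        moreover have "i mod D1 < D1" using D by simp
        ultimately have "i \<in> (\<lambda>b. s * D1 + b) ` {..<D1}" by blast
        thus False using i by blast
      qed
      thus "(if i div D1 = s then H i else \<zero>) = \<zero>" by simp
    qed
    show "\<And>x. x \<in> (\<lambda>b. s * D1 + b) ` {..<D1} \<Longrightarrow> H x = (if x div D1 = s then H x else \<zero>)"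
      using D by auto
  qed (use H in auto)
  also have "(\<Oplus>r\<in>(\<lambda>b. s * D1 + b) ` {..<D1}. H r) = (\<Oplus>b\<in>{..<D1}. H (s * D1 + b))"
    using H by (subst finsum_reindex) (auto simp: inj_on_def)
  finally show ?thesis by simp
qed

lemma finsum_if_eq:
  fixes s0 :: nat
  assumes "s0 \<in> A" "finite A" "\<And>s. s \<in> A \<Longrightarrow> f s \<in> carrier R"
  shows "(\<Oplus>s\<in>A. if s = s0 then f s else \<zero>) = f s0"
  using finsum_singleton[of s0 A f] assms by (simp add: eq_commute)

end




locale dss = field +
  fixes n k d M \<beta> :: nat and pt :: "nat \<Rightarrow> 'a" and \<phi> :: "nat \<Rightarrow> nat \<times> nat \<times> nat"
  assumes k1: "1 \<le> k" and kd: "k \<le> d" and dn: "d < n" and bpos: "0 < \<beta>"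
    and pt_inj: "inj_on pt {..<n}" and pt_c: "\<And>i. i < n \<Longrightarrow> pt i \<in> carrier R"
    and phi_inj: "inj_on \<phi> {..<M}"
    and phi_T: "\<And>c s a b. c < M \<Longrightarrow> \<phi> c = (s, a, b) \<Longrightarrow> s < \<beta> \<and> a \<le> b \<and> b \<le> d \<and> a < k"
begin

definition E :: "nat \<Rightarrow> nat \<Rightarrow> nat \<Rightarrow> nat \<Rightarrow> 'a" where
  "E c s a b = (if \<phi> c = (s, min a b, max a b) then \<one> else \<zero>)"

definition N0 :: "nat \<Rightarrow> nat \<Rightarrow> nat \<Rightarrow> 'a" where
  "N0 i r c = ev (\<lambda>a. E c (r div Suc d) a (r mod Suc d)) (Suc d) (pt i)"

definition Rm :: "nat \<Rightarrow> nat \<Rightarrow> 'a" where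
  "Rm r c = E c (r div k) (r mod k) d"

lemma m_swap23: "a \<in> carrier R \<Longrightarrow> b \<in> carrier R \<Longrightarrow> c \<in> carrier R \<Longrightarrow> a \<otimes> b \<otimes> c = a \<otimes> c \<otimes> b"
proof -
  assume c: "a \<in> carrier R" "b \<in> carrier R" "c \<in> carrier R"
  have "a \<otimes> b \<otimes> c = a \<otimes> (b \<otimes> c)" using c by (rule m_assoc)
  also have "b \<otimes> c = c \<otimes> b" using c by (intro m_comm) auto
  also have "a \<otimes> (c \<otimes> b) = a \<otimes> c \<otimes> b" using c by (intro m_assoc[symmetric]) auto
  finally show ?thesis .
qed

lemma E_c [simp]: "E c s a b \<in> carrier R"
  unfolding E_def by auto

lemma E_sym: "E c s a b = E c s b a"
  unfolding E_def by (simp add: min.commute max.commute)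

lemma E_zero: "c < M \<Longrightarrow> k \<le> a \<Longrightarrow> k \<le> b \<Longrightarrow> E c s a b = \<zero>"
proof -
  assume c: "c < M" "k \<le> a" "k \<le> b"
  obtain s' a' b' where ph: "\<phi> c = (s', a', b')" by (cases "\<phi> c") auto
  have "a' < k" using phi_T[OF c(1) ph] by simp
  hence "\<phi> c \<noteq> (s, min a b, max a b)" using ph c by auto
  thus ?thesis unfolding E_def by simp
qed

lemma N0_c: "i < n \<Longrightarrow> N0 i r c \<in> carrier R"
  unfolding N0_def using pt_c by (intro ev_closed) auto

lemma Rm_c: "Rm r c \<in> carrier R"
  unfolding Rm_def by simp

definition mx :: "(nat \<Rightarrow> 'a) \<Rightarrow> nat \<Rightarrow> nat \<Rightarrow> nat \<Rightarrow> 'a" where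
  "mx x s a b = (\<Oplus>c\<in>{..<M}. E c s a b \<otimes> x c)"

lemma mx_c: "is_vec R M x \<Longrightarrow> mx x s a b \<in> carrier R"
  unfolding mx_def is_vec_def by (intro finsum_closed) auto

lemma mx_sym: "mx x s a b = mx x s b a"
  unfolding mx_def by (simp add: E_sym)

lemma mx_zero: "is_vec R M x \<Longrightarrow> k \<le> a \<Longrightarrow> k \<le> b \<Longrightarrow> mx x s a b = \<zero>"
proof -
  assume x: "is_vec R M x" and ab: "k \<le> a" "k \<le> b"
  have "mx x s a b = (\<Oplus>c\<in>{..<M}. \<zero>)"
    unfolding mx_def using x ab by (intro finsum_cong') (auto simp: E_zero is_vec_def)
  thus ?thesis by simp
qed

lemma mx_phi: 
  assumes x: "is_vec R M x" and c0: "c0 < M" and ph: "\<phi> c0 = (s, a, b)"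
  shows "mx x s a b = x c0"
proof -
  have ab: "a \<le> b" using phi_T[OF c0 ph] by simp
  have "mx x s a b = (\<Oplus>c\<in>{..<M}. if c = c0 then x c else \<zero>)"
    unfolding mx_def
  proof (intro finsum_cong')
    fix c assume c: "c \<in> {..<M}"
    show "E c s a b \<otimes> x c = (if c = c0 then x c else \<zero>)"
    proof (cases "c = c0")
      case True thus ?thesis using ph ab x c unfolding E_def is_vec_def by simp
    next
      case False
      hence "\<phi> c \<noteq> \<phi> c0" using phi_inj c c0 by (auto simp: inj_on_def)
      thus ?thesis using ph ab False x c unfolding E_def is_vec_def by simp
    qed
  qed (use x in \<open>auto simp: is_vec_def\<close>)
  also have "\<dots> = x c0" using x c0 by (intro finsum_if_eq) (auto simp: is_vec_def)
  finally show ?thesis .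
qed

lemma stored_N0:
  assumes x: "is_vec R M x" and i: "i < n"
  shows "stored R M (N0 i) r x = ev (\<lambda>a. mx x (r div Suc d) a (r mod Suc d)) (Suc d) (pt i)"
proof -
  let ?s = "r div Suc d" and ?b = "r mod Suc d"
  have p: "pt i \<in> carrier R" using pt_c[OF i] .
  have xc: "\<And>c. c < M \<Longrightarrow> x c \<in> carrier R" using x unfolding is_vec_def by auto
  have "stored R M (N0 i) r x = (\<Oplus>c\<in>{..<M}. \<Oplus>a\<in>{..<Suc d}. (E c ?s a ?b \<otimes> pt i [^] a) \<otimes> x c)"
    unfolding stored_def N0_def ev_def
  proof (intro finsum_cong')
    fix c assume c: "c \<in> {..<M}"
    show "(\<Oplus>a\<in>{..<Suc d}. E c ?s a ?b \<otimes> pt i [^] a) \<otimes> x c = (\<Oplus>a\<in>{..<Suc d}. (E c ?s a ?b \<otimes> pt i [^] a) \<otimes> x c)"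
      using xc c p by (intro finsum_ldistr) auto
  qed (use xc p in \<open>auto intro!: finsum_closed\<close>)
  also have "\<dots> = (\<Oplus>a\<in>{..<Suc d}. \<Oplus>c\<in>{..<M}. (E c ?s a ?b \<otimes> pt i [^] a) \<otimes> x c)"
    using xc p by (intro finsum_swap) auto
  also have "\<dots> = ev (\<lambda>a. mx x ?s a ?b) (Suc d) (pt i)"
    unfolding ev_def mx_def
  proof (intro finsum_cong')
    fix a
    show "(\<Oplus>c\<in>{..<M}. E c ?s a ?b \<otimes> pt i [^] a \<otimes> x c) = (\<Oplus>c\<in>{..<M}. E c ?s a ?b \<otimes> x c) \<otimes> pt i [^] a"
      using xc p by (subst finsum_ldistr) (auto intro!: finsum_cong' simp: m_swap23)
  qed (use xc p in \<open>auto intro!: finsum_closed\<close>)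
  finally show ?thesis .
qed

end



lemma divmod_block: "(b::nat) < D \<Longrightarrow> (s * D + b) div D = s \<and> (s * D + b) mod D = b"
  by (simp add: add.commute)

context dss begin

lemma recovers_N0:
  assumes K: "K \<subseteq> {..<n}" "card K = k"
  shows "recovers R M (Suc d * \<beta>) N0 K"
  unfolding recovers_def
proof (rule allI, rule allI, rule impI, rule impI, rule impI)
  fix x y assume x: "is_vec R M x" and y: "is_vec R M y"
    and st: "\<forall>i\<in>K. \<forall>r<Suc d * \<beta>. stored R M (N0 i) r x = stored R M (N0 i) r y"
  have evq: "ev (\<lambda>a. mx x s a b) (Suc d) z = ev (\<lambda>a. mx y s a b) (Suc d) z"
    if s: "s < \<beta>" and b: "b < Suc d" and z: "z \<in> pt ` K" for s b z
  proof -
    obtain i where i: "i \<in> K" "z = pt i" using z by auto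
    have iN: "i < n" using K i by auto
    define r where "r = s * Suc d + b"
    have r: "r < Suc d * \<beta>"
    proof -
      have "Suc s * Suc d \<le> \<beta> * Suc d" using s by (intro mult_le_mono1) simp
      thus ?thesis unfolding r_def using b by (simp add: mult.commute)
    qed
    have rd: "r div Suc d = s" "r mod Suc d = b" unfolding r_def using divmod_block[OF b, of s] by auto
    show ?thesis using st i r stored_N0[OF x iN, of r] stored_N0[OF y iN, of r] rd by simp
  qed
  have S: "pt ` K \<subseteq> carrier R" "finite (pt ` K)" "k \<le> card (pt ` K)"
  proof -
    show "pt ` K \<subseteq> carrier R" using K pt_c by auto
    have fK: "finite K" using K finite_subset by blast
    thus "finite (pt ` K)" by simp
    have "inj_on pt K" using pt_inj K inj_on_subset by blast
    thus "k \<le> card (pt ` K)" using card_image[of pt K] K by simp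
  qed
  have c1: "mx x s a b = mx y s a b"
    if s: "s < \<beta>" and b: "k \<le> b" "b < Suc d" and a: "a < Suc d" for s a b
  proof (rule ev_roots_eq[of "\<lambda>a. mx x s a b" "\<lambda>a. mx y s a b" "pt ` K" k "Suc d" a])
    show "\<And>a. k \<le> a \<Longrightarrow> a < Suc d \<Longrightarrow> mx x s a b = mx y s a b"
      using mx_zero[OF x] mx_zero[OF y] b by simp
  qed (use mx_c[OF x] mx_c[OF y] S evq s b a in auto)
  have c2: "mx x s a b = mx y s a b"
    if s: "s < \<beta>" and b: "b < Suc d" and a: "a < Suc d" for s a b
  proof (cases "k \<le> b")
    case True thus ?thesis using c1 s b a by simp
  next
    case False
    show ?thesis
    proof (rule ev_roots_eq[of "\<lambda>a. mx x s a b" "\<lambda>a. mx y s a b" "pt ` K" k "Suc d" a])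
      show "\<And>a'. k \<le> a' \<Longrightarrow> a' < Suc d \<Longrightarrow> mx x s a' b = mx y s a' b"
        using c1[OF s _ _ b] mx_sym by metis
    qed (use mx_c[OF x] mx_c[OF y] S evq s b a in auto)
  qed
  show "\<forall>c<M. x c = y c"
  proof (intro allI impI)
    fix c assume c: "c < M"
    obtain s a b where ph: "\<phi> c = (s, a, b)" by (cases "\<phi> c") auto
    have rng: "s < \<beta>" "a < Suc d" "b < Suc d" using phi_T[OF c ph] by auto
    show "x c = y c" using mx_phi[OF x c ph] mx_phi[OF y c ph] c2[OF rng(1) rng(3) rng(2)] by simp
  qed
qed

end



context dss begin

definition coR :: "nat \<Rightarrow> (nat \<Rightarrow> nat \<Rightarrow> 'a) \<Rightarrow> (nat \<Rightarrow> 'a) \<Rightarrow> 'a repair_coeffs" where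
  "coR f lam mu = \<lparr>hB = (\<lambda>j s r. if r div Suc d = s then pt f [^] (r mod Suc d) else \<zero>),
     rB = (\<lambda>s r. if r div k = s then pt f [^] (r mod k) else \<zero>),
     hC = (\<lambda>t j s. if s = t div Suc d then lam j (t mod Suc d) else \<zero>),
     rC = (\<lambda>t s. if s = t div Suc d then mu (t mod Suc d) else \<zero>)\<rparr>"

lemma coR_sel:
  "hB (coR f lam mu) = (\<lambda>j s r. if r div Suc d = s then pt f [^] (r mod Suc d) else \<zero>)"
  "rB (coR f lam mu) = (\<lambda>s r. if r div k = s then pt f [^] (r mod k) else \<zero>)"
  "hC (coR f lam mu) = (\<lambda>t j s. if s = t div Suc d then lam j (t mod Suc d) else \<zero>)"
  "rC (coR f lam mu) = (\<lambda>t s. if s = t div Suc d then mu (t mod Suc d) else \<zero>)"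
  unfolding coR_def by simp_all

definition V :: "nat \<Rightarrow> nat \<Rightarrow> nat \<Rightarrow> nat \<Rightarrow> 'a" where
  "V f c s a = ev (\<lambda>b. E c s b a) (Suc d) (pt f)"

lemma V_c: "f < n \<Longrightarrow> V f c s a \<in> carrier R"
  unfolding V_def using pt_c by (intro ev_closed) auto

lemma N0_V: "N0 f t c = V f c (t div Suc d) (t mod Suc d)"
  unfolding N0_def V_def ..

lemma helper_packet:
  assumes f: "f < n" and j: "j < n" and s: "s < \<beta>"
  shows "(\<Oplus>r\<in>{..<Suc d * \<beta>}. hB (coR f lam mu) j s r \<otimes> N0 j r c) = ev (V f c s) (Suc d) (pt j)"
proof -
  have pf: "pt f \<in> carrier R" and pj: "pt j \<in> carrier R" using pt_c f j by auto
  have "(\<Oplus>r\<in>{..<Suc d * \<beta>}. hB (coR f lam mu) j s r \<otimes> N0 j r c)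
      = (\<Oplus>r\<in>{..<Suc d * \<beta>}. if r div Suc d = s then pt f [^] (r mod Suc d) \<otimes> N0 j r c else \<zero>)"
    unfolding coR_sel using pf N0_c[OF j] by (intro finsum_cong') auto
  also have "\<dots> = (\<Oplus>b\<in>{..<Suc d}. pt f [^] ((s * Suc d + b) mod Suc d) \<otimes> N0 j (s * Suc d + b) c)"
    using pf N0_c[OF j] by (intro finsum_block[OF s]) auto
  also have "\<dots> = (\<Oplus>b\<in>{..<Suc d}. \<Oplus>a\<in>{..<Suc d}. pt f [^] b \<otimes> (E c s a b \<otimes> pt j [^] a))"
  proof (intro finsum_cong')
    fix b assume b: "b \<in> {..<Suc d}"
    have dm: "(s * Suc d + b) div Suc d = s" "(s * Suc d + b) mod Suc d = b"
      using divmod_block[of b "Suc d" s] b by auto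
    show "pt f [^] ((s * Suc d + b) mod Suc d) \<otimes> N0 j (s * Suc d + b) c =
          (\<Oplus>a\<in>{..<Suc d}. pt f [^] b \<otimes> (E c s a b \<otimes> pt j [^] a))"
      unfolding N0_def ev_def dm using pf pj by (intro finsum_rdistr) auto
  qed (use pf pj in \<open>auto intro!: finsum_closed\<close>)
  also have "\<dots> = (\<Oplus>a\<in>{..<Suc d}. \<Oplus>b\<in>{..<Suc d}. pt f [^] b \<otimes> (E c s a b \<otimes> pt j [^] a))"
    using pf pj by (intro finsum_swap) auto
  also have "\<dots> = ev (V f c s) (Suc d) (pt j)"
    unfolding ev_def
  proof (intro finsum_cong')
    fix a assume a: "a \<in> {..<Suc d}"
    have "V f c s a \<otimes> pt j [^] a = (\<Oplus>b\<in>{..<Suc d}. (E c s b a \<otimes> pt f [^] b) \<otimes> pt j [^] a)"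
      unfolding V_def ev_def using pf pj by (intro finsum_ldistr) auto
    also have "\<dots> = (\<Oplus>b\<in>{..<Suc d}. pt f [^] b \<otimes> (E c s a b \<otimes> pt j [^] a))"
    proof (intro finsum_cong')
      fix b
      have e: "E c s b a = E c s a b" by (rule E_sym)
      have "E c s a b \<otimes> pt f [^] b \<otimes> pt j [^] a = pt f [^] b \<otimes> E c s a b \<otimes> pt j [^] a"
        using pf by (simp add: m_comm)
      also have "\<dots> = pt f [^] b \<otimes> (E c s a b \<otimes> pt j [^] a)" using pf pj by (simp add: m_assoc)
      finally show "E c s b a \<otimes> pt f [^] b \<otimes> pt j [^] a = pt f [^] b \<otimes> (E c s a b \<otimes> pt j [^] a)"
        unfolding e .
    qed (use pf pj in auto)
    finally show "(\<Oplus>b\<in>{..<Suc d}. pt f [^] b \<otimes> (E c s a b \<otimes> pt j [^] a)) = V f c s a \<otimes> pt j [^] a" by simp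
  qed (use pf pj V_c[OF f] in \<open>auto intro!: finsum_closed\<close>)
  finally show ?thesis .
qed

lemma repair_packet:
  assumes f: "f < n" and s: "s < \<beta>" and c: "c < M"
  shows "(\<Oplus>r\<in>{..<k * \<beta>}. rB (coR f lam mu) s r \<otimes> Rm r c) = V f c s d"
proof -
  have pf: "pt f \<in> carrier R" using pt_c f by auto
  have k0: "0 < k" using k1 by simp
  have "(\<Oplus>r\<in>{..<k * \<beta>}. rB (coR f lam mu) s r \<otimes> Rm r c)
      = (\<Oplus>r\<in>{..<k * \<beta>}. if r div k = s then pt f [^] (r mod k) \<otimes> Rm r c else \<zero>)"
    unfolding coR_sel using pf Rm_c by (intro finsum_cong') auto
  also have "\<dots> = (\<Oplus>a\<in>{..<k}. pt f [^] ((s * k + a) mod k) \<otimes> Rm (s * k + a) c)"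
    using pf Rm_c by (intro finsum_block[OF s k0]) auto
  also have "\<dots> = (\<Oplus>a\<in>{..<k}. E c s a d \<otimes> pt f [^] a)"
  proof (intro finsum_cong')
    fix a assume a: "a \<in> {..<k}"
    have dm: "(s * k + a) div k = s" "(s * k + a) mod k = a"
      using divmod_block[of a k s] a by auto
    show "pt f [^] ((s * k + a) mod k) \<otimes> Rm (s * k + a) c = E c s a d \<otimes> pt f [^] a"
      unfolding Rm_def dm using pf by (simp add: m_comm)
  qed (use pf in auto)
  also have "\<dots> = V f c s d"
    unfolding V_def ev_def
  proof (rule add.finprod_mono_neutral_cong_left)
    show "{..<k} \<subseteq> {..<Suc d}" using kd by auto
    show "\<And>i. i \<in> {..<Suc d} - {..<k} \<Longrightarrow> E c s i d \<otimes> pt f [^] i = \<zero>"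
      using E_zero[OF c _ kd] pf by simp
  qed (use pf in auto)
  finally show ?thesis .
qed

lemma repair_exact:
  assumes f: "f < n" and Dh: "Dh \<subseteq> {..<n}" and c: "c < M" and t: "t < Suc d * \<beta>"
    and lamc: "\<forall>j b. lam j b \<in> carrier R" and muc: "\<forall>b. mu b \<in> carrier R"
    and ip: "\<forall>g. (\<forall>a. g a \<in> carrier R) \<longrightarrow>
        (\<forall>b\<le>d. (\<Oplus>j\<in>Dh. lam j b \<otimes> ev g (Suc d) (pt j)) \<oplus> mu b \<otimes> g d = g b)"
  shows "repair_node R (Suc d * \<beta>) (k * \<beta>) \<beta> N0 Rm Dh (coR f lam mu) t c = N0 f t c"
proof -
  define s' where "s' = t div Suc d"
  define b where "b = t mod Suc d"
  have s': "s' < \<beta>" unfolding s'_def using t by (simp add: less_mult_imp_div_less mult.commute)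
  have b: "b \<le> d" unfolding b_def by (simp add: less_Suc_eq_le)
  have fD: "finite Dh" using Dh finite_subset by blast
  have jn: "\<And>j. j \<in> Dh \<Longrightarrow> j < n" using Dh by auto
  have evV: "\<And>s j. j < n \<Longrightarrow> ev (V f c s) (Suc d) (pt j) \<in> carrier R"
    using V_c[OF f] pt_c by (intro ev_closed) auto
  have P: "(\<Oplus>s\<in>{..<\<beta>}. hC (coR f lam mu) t j s \<otimes>
             (\<Oplus>r\<in>{..<Suc d * \<beta>}. hB (coR f lam mu) j s r \<otimes> N0 j r c))
         = lam j b \<otimes> ev (V f c s') (Suc d) (pt j)" if j: "j \<in> Dh" for j
  proof -
    have "(\<Oplus>s\<in>{..<\<beta>}. hC (coR f lam mu) t j s \<otimes>
             (\<Oplus>r\<in>{..<Suc d * \<beta>}. hB (coR f lam mu) j s r \<otimes> N0 j r c))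
        = (\<Oplus>s\<in>{..<\<beta>}. if s = s' then lam j b \<otimes> ev (V f c s) (Suc d) (pt j) else \<zero>)"
    proof (intro finsum_cong')
      fix s assume s: "s \<in> {..<\<beta>}"
      show "hC (coR f lam mu) t j s \<otimes> (\<Oplus>r\<in>{..<Suc d * \<beta>}. hB (coR f lam mu) j s r \<otimes> N0 j r c)
          = (if s = s' then lam j b \<otimes> ev (V f c s) (Suc d) (pt j) else \<zero>)"
        using helper_packet[OF f jn[OF j], of s lam mu c] s V_c[OF f] pt_c[OF jn[OF j]]
      proof -
        have "ev (V f c s) (Suc d) (pt j) \<in> carrier R"
          using V_c[OF f] pt_c[OF jn[OF j]] by (intro ev_closed) auto
        thus ?thesis using helper_packet[OF f jn[OF j], of s lam mu c] s
          unfolding coR_sel s'_def b_def by auto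
      qed
    qed (use lamc evV jn[OF j] in auto)
    also have "\<dots> = lam j b \<otimes> ev (V f c s') (Suc d) (pt j)"
      using s' lamc evV jn[OF j] by (intro finsum_if_eq) auto
    finally show ?thesis .
  qed
  have Q: "(\<Oplus>s\<in>{..<\<beta>}. rC (coR f lam mu) t s \<otimes>
             (\<Oplus>r\<in>{..<k * \<beta>}. rB (coR f lam mu) s r \<otimes> Rm r c)) = mu b \<otimes> V f c s' d"
  proof -
    have "(\<Oplus>s\<in>{..<\<beta>}. rC (coR f lam mu) t s \<otimes>
             (\<Oplus>r\<in>{..<k * \<beta>}. rB (coR f lam mu) s r \<otimes> Rm r c))
        = (\<Oplus>s\<in>{..<\<beta>}. if s = s' then mu b \<otimes> V f c s d else \<zero>)"
    proof (intro finsum_cong')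
      fix s assume s: "s \<in> {..<\<beta>}"
      show "rC (coR f lam mu) t s \<otimes> (\<Oplus>r\<in>{..<k * \<beta>}. rB (coR f lam mu) s r \<otimes> Rm r c)
          = (if s = s' then mu b \<otimes> V f c s d else \<zero>)"
        using repair_packet[OF f _ c, of s lam mu] s V_c[OF f]
        unfolding coR_sel s'_def b_def by auto
    qed (use muc V_c[OF f] in auto)
    also have "\<dots> = mu b \<otimes> V f c s' d"
      using s' muc V_c[OF f] by (intro finsum_if_eq) auto
    finally show ?thesis .
  qed
  have "repair_node R (Suc d * \<beta>) (k * \<beta>) \<beta> N0 Rm Dh (coR f lam mu) t c
      = (\<Oplus>j\<in>Dh. lam j b \<otimes> ev (V f c s') (Suc d) (pt j)) \<oplus> mu b \<otimes> V f c s' d"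
    unfolding repair_node_def Q
    using P lamc evV jn fD by (subst finsum_cong'[OF refl]) auto
  also have "\<dots> = V f c s' b"
    using ip V_c[OF f] b by blast
  also have "\<dots> = N0 f t c" unfolding N0_V s'_def b_def ..
  finally show ?thesis .
qed

end



lemma card_T0:
  fixes d k :: nat
  assumes "k \<le> Suc d"
  shows "2 * card {(a, b). a \<le> b \<and> b \<le> d \<and> a < k} + k * k = k * (2 * d + 3)"
  using assms
proof (induction k)
  case 0 thus ?case by simp
next
  case (Suc k)
  have eq: "{(a, b). a \<le> b \<and> b \<le> d \<and> a < Suc k} = {(a, b). a \<le> b \<and> b \<le> d \<and> a < k} \<union> ({k} \<times> {k..d})"
    by auto
  have fin: "finite {(a, b). a \<le> b \<and> b \<le> d \<and> a < k}"
    by (rule finite_subset[of _ "{..<k} \<times> {..d}"]) auto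
  have dis: "{(a, b). a \<le> b \<and> b \<le> d \<and> a < k} \<inter> ({k} \<times> {k..d}) = {}" by auto
  have "card {(a, b). a \<le> b \<and> b \<le> d \<and> a < Suc k} = card {(a, b). a \<le> b \<and> b \<le> d \<and> a < k} + (Suc d - k)"
    unfolding eq using fin dis by (subst card_Un_disjoint) (auto simp: card_cartesian_product)
  thus ?case using Suc by (simp add: algebra_simps)
qed

context dss begin

definition \<sigma>0 :: "event list \<Rightarrow> event \<Rightarrow> 'a repair_coeffs" where
  "\<sigma>0 es e = (SOME co. coeffs_ok R (Suc d * \<beta>) (k * \<beta>) \<beta> (snd e) co \<and>
      (\<forall>t<Suc d * \<beta>. \<forall>c<M. repair_node R (Suc d * \<beta>) (k * \<beta>) \<beta> N0 Rm (snd e) co t c = N0 (fst e) t c))"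

lemma sigma0_ok:
  assumes e: "valid_event n d e"
  shows "coeffs_ok R (Suc d * \<beta>) (k * \<beta>) \<beta> (snd e) (\<sigma>0 es e) \<and>
      (\<forall>t<Suc d * \<beta>. \<forall>c<M. repair_node R (Suc d * \<beta>) (k * \<beta>) \<beta> N0 Rm (snd e) (\<sigma>0 es e) t c = N0 (fst e) t c)"
proof -
  obtain f Dh where fe: "e = (f, Dh)" by (cases e) auto
  have f: "f < n" and Dh: "Dh \<subseteq> {..<n}" "f \<notin> Dh" and cD: "card Dh = d"
    using e unfolding valid_event_def fe by auto
  have fD: "finite Dh" using Dh finite_subset by blast
  have ij: "inj_on pt Dh" using pt_inj Dh inj_on_subset by blast
  have pc: "pt ` Dh \<subseteq> carrier R" using pt_c Dh by auto
  obtain lam mu where lamc: "\<forall>j b. lam j b \<in> carrier R" and muc: "\<forall>b. mu b \<in> carrier R"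
    and ip: "\<forall>g. (\<forall>a. g a \<in> carrier R) \<longrightarrow>
        (\<forall>b\<le>d. (\<Oplus>j\<in>Dh. lam j b \<otimes> ev g (Suc d) (pt j)) \<oplus> mu b \<otimes> g d = g b)"
    using interp[OF fD ij pc cD] by blast
  have pf: "pt f \<in> carrier R" using pt_c f by auto
  have "coeffs_ok R (Suc d * \<beta>) (k * \<beta>) \<beta> Dh (coR f lam mu)"
    unfolding coeffs_ok_def coR_sel using pf lamc muc by auto
  moreover have "\<forall>t<Suc d * \<beta>. \<forall>c<M. repair_node R (Suc d * \<beta>) (k * \<beta>) \<beta> N0 Rm Dh (coR f lam mu) t c = N0 f t c"
    using repair_exact[OF f Dh(1) _ _ lamc muc ip] by blast
  ultimately have ex: "\<exists>co. coeffs_ok R (Suc d * \<beta>) (k * \<beta>) \<beta> Dh co \<and>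
      (\<forall>t<Suc d * \<beta>. \<forall>c<M. repair_node R (Suc d * \<beta>) (k * \<beta>) \<beta> N0 Rm Dh co t c = N0 f t c)"
    by blast
  show ?thesis unfolding \<sigma>0_def fe fst_conv snd_conv using someI_ex[OF ex] .
qed

lemma repair_node_cong:
  assumes co: "coeffs_ok R \<alpha> \<alpha>' \<beta>' D co" and D: "D \<subseteq> {..<n}"
    and eq: "\<And>j r. j \<in> D \<Longrightarrow> r < \<alpha> \<Longrightarrow> N j r c = N0 j r c" and True: "t < \<alpha>"
  shows "repair_node R \<alpha> \<alpha>' \<beta>' N Rm D co t c = repair_node R \<alpha> \<alpha>' \<beta>' N0 Rm D co t c"
proof -
  have fD: "finite D" using D finite_subset by blast
  have hB: "\<And>j s r. j \<in> D \<Longrightarrow> s < \<beta>' \<Longrightarrow> r < \<alpha> \<Longrightarrow> hB co j s r \<in> carrier R"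
    and hC: "\<And>t j s. t < \<alpha> \<Longrightarrow> j \<in> D \<Longrightarrow> s < \<beta>' \<Longrightarrow> hC co t j s \<in> carrier R"
    using co unfolding coeffs_ok_def by auto
  have jn: "\<And>j. j \<in> D \<Longrightarrow> j < n" using D by auto
  have inner: "(\<Oplus>r\<in>{..<\<alpha>}. hB co j s r \<otimes> N j r c) = (\<Oplus>r\<in>{..<\<alpha>}. hB co j s r \<otimes> N0 j r c)"
    if "j \<in> D" "s < \<beta>'" for j s
    using that hB eq N0_c[OF jn[OF that(1)]] by (intro finsum_cong') auto
  have innerc: "(\<Oplus>r\<in>{..<\<alpha>}. hB co j s r \<otimes> N0 j r c) \<in> carrier R"
    if "j \<in> D" "s < \<beta>'" for j s
    using that hB N0_c[OF jn[OF that(1)]] by (intro finsum_closed) auto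
    have "(\<Oplus>j\<in>D. \<Oplus>s\<in>{..<\<beta>'}. hC co t j s \<otimes> (\<Oplus>r\<in>{..<\<alpha>}. hB co j s r \<otimes> N j r c))
        = (\<Oplus>j\<in>D. \<Oplus>s\<in>{..<\<beta>'}. hC co t j s \<otimes> (\<Oplus>r\<in>{..<\<alpha>}. hB co j s r \<otimes> N0 j r c))"
    proof (rule finsum_cong')
      fix j assume j: "j \<in> D"
      show "(\<Oplus>s\<in>{..<\<beta>'}. hC co t j s \<otimes> (\<Oplus>r\<in>{..<\<alpha>}. hB co j s r \<otimes> N j r c))
        = (\<Oplus>s\<in>{..<\<beta>'}. hC co t j s \<otimes> (\<Oplus>r\<in>{..<\<alpha>}. hB co j s r \<otimes> N0 j r c))"
        using j inner innerc hC[OF True] by (intro finsum_cong') auto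
    qed (use innerc hC[OF True] fD in \<open>auto intro!: finsum_closed\<close>)
    thus ?thesis unfolding repair_node_def by simp
qed

end



context dss begin

lemma run_inv:
  "list_all (valid_event n d) es \<Longrightarrow>
   \<forall>i<n. \<forall>r<Suc d * \<beta>. \<forall>c<M. run_rev R (Suc d * \<beta>) (k * \<beta>) \<beta> N0 Rm \<sigma>0 es i r c = N0 i r c"
proof (induction es)
  case Nil thus ?case by simp
next
  case (Cons e es)
  define N where "N = run_rev R (Suc d * \<beta>) (k * \<beta>) \<beta> N0 Rm \<sigma>0 es"
  have IH: "\<And>i r c. i < n \<Longrightarrow> r < Suc d * \<beta> \<Longrightarrow> c < M \<Longrightarrow> N i r c = N0 i r c"
    using Cons unfolding N_def by simp
  have ve: "valid_event n d e" using Cons by simp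
  have D: "snd e \<subseteq> {..<n}" "fst e < n" using ve unfolding valid_event_def by auto
  have ok: "coeffs_ok R (Suc d * \<beta>) (k * \<beta>) \<beta> (snd e) (\<sigma>0 (rev es) e)"
    and ex: "\<And>t c. t < Suc d * \<beta> \<Longrightarrow> c < M \<Longrightarrow>
        repair_node R (Suc d * \<beta>) (k * \<beta>) \<beta> N0 Rm (snd e) (\<sigma>0 (rev es) e) t c = N0 (fst e) t c"
    using sigma0_ok[OF ve, of "rev es"] by auto
  show ?case
  proof (intro allI impI)
    fix i r c assume i: "i < n" and r: "r < Suc d * \<beta>" and c: "c < M"
    show "run_rev R (Suc d * \<beta>) (k * \<beta>) \<beta> N0 Rm \<sigma>0 (e # es) i r c = N0 i r c"
    proof (cases "i = fst e")
      case True
      have "repair_node R (Suc d * \<beta>) (k * \<beta>) \<beta> N Rm (snd e) (\<sigma>0 (rev es) e) r c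
          = repair_node R (Suc d * \<beta>) (k * \<beta>) \<beta> N0 Rm (snd e) (\<sigma>0 (rev es) e) r c"
        using D(1) IH c r by (intro repair_node_cong[OF ok]) auto
      thus ?thesis using True ex[OF r c] unfolding N_def by (simp add: Let_def)
    next
      case False thus ?thesis using IH[OF i r c] unfolding N_def by (simp add: Let_def)
    qed
  qed
qed

lemma recovers_cong:
  assumes K: "K \<subseteq> {..<n}" and eq: "\<And>i r c. i \<in> K \<Longrightarrow> r < \<alpha> \<Longrightarrow> c < M \<Longrightarrow> N i r c = N0 i r c"
    and rc: "recovers R M \<alpha> N0 K"
  shows "recovers R M \<alpha> N K"
  unfolding recovers_def
proof (rule allI, rule allI, rule impI, rule impI, rule impI)
  fix x y assume x: "is_vec R M x" and y: "is_vec R M y"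
    and st: "\<forall>i\<in>K. \<forall>r<\<alpha>. stored R M (N i) r x = stored R M (N i) r y"
  have s: "stored R M (N i) r z = stored R M (N0 i) r z" if "is_vec R M z" "i \<in> K" "r < \<alpha>" for z i r
    unfolding stored_def using that eq N0_c K by (intro finsum_cong') (auto simp: is_vec_def)
  show "\<forall>c<M. x c = y c"
    using rc x y st s unfolding recovers_def by metis
qed

lemma dss_main:
  "\<exists>N0 R' \<sigma>. (\<forall>i<n. is_mat R (Suc d * \<beta>) M (N0 i)) \<and> is_mat R (k * \<beta>) M R' \<and>
     (\<forall>es e. valid_event n d e \<longrightarrow> coeffs_ok R (Suc d * \<beta>) (k * \<beta>) \<beta> (snd e) (\<sigma> es e)) \<and>
     (\<forall>es. list_all (valid_event n d) es \<longrightarrow>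
        (\<forall>K. K \<subseteq> {..<n} \<and> card K = k \<longrightarrow>
           recovers R M (Suc d * \<beta>) (run R (Suc d * \<beta>) (k * \<beta>) \<beta> N0 R' \<sigma> es) K))"
proof (intro exI conjI allI impI)
  show "\<And>i. i < n \<Longrightarrow> is_mat R (Suc d * \<beta>) M (N0 i)" unfolding is_mat_def using N0_c by auto
  show "is_mat R (k * \<beta>) M Rm" unfolding is_mat_def using Rm_c by auto
  show "\<And>es e. valid_event n d e \<Longrightarrow> coeffs_ok R (Suc d * \<beta>) (k * \<beta>) \<beta> (snd e) (\<sigma>0 es e)"
    using sigma0_ok by blast
  fix es K assume es: "list_all (valid_event n d) es" and K: "K \<subseteq> {..<n} \<and> card K = k"
  have inv: "\<forall>i<n. \<forall>r<Suc d * \<beta>. \<forall>c<M. run R (Suc d * \<beta>) (k * \<beta>) \<beta> N0 Rm \<sigma>0 es i r c = N0 i r c"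
    using run_inv[of "rev es"] es unfolding run_def by (simp add: list_all_rev)
  show "recovers R M (Suc d * \<beta>) (run R (Suc d * \<beta>) (k * \<beta>) \<beta> N0 Rm \<sigma>0 es) K"
    using K inv by (intro recovers_cong[OF _ _ recovers_N0]) auto
qed

end


theorem proposition4:
  fixes n k d M \<alpha> \<alpha>' \<beta> :: nat
  assumes "1 \<le> k" and "k \<le> d" and "d \<le> n - 1"
    and "\<beta> > 0" and "2 * M = \<beta> * (k * (2 * d - k + 3))"
    and "\<alpha> = (d + 1) * \<beta>" and "\<alpha>' = k * \<beta>"
  shows "\<exists>Q::nat. \<forall>F :: 'b ring.
           field F \<and> finite (carrier F) \<and> card (carrier F) \<ge> Q \<longrightarrow>
           (\<exists>N0 R \<sigma>.
              (\<forall>i<n. is_mat F \<alpha> M (N0 i)) \<and> is_mat F \<alpha>' M R \<and>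
              (\<forall>es e. valid_event n d e \<longrightarrow> coeffs_ok F \<alpha> \<alpha>' \<beta> (snd e) (\<sigma> es e)) \<and>
              (\<forall>es. list_all (valid_event n d) es \<longrightarrow>
                 (\<forall>K. K \<subseteq> {..<n} \<and> card K = k \<longrightarrow>
                    recovers F M \<alpha> (run F \<alpha> \<alpha>' \<beta> N0 R \<sigma> es) K)))"
proof (intro exI[of _ n] allI impI)
  fix F :: "'b ring"
  assume F: "field F \<and> finite (carrier F) \<and> card (carrier F) \<ge> n"
  have dn: "d < n" using assms(1-3) by linarith
  obtain pt where pt: "pt ` {..<n} \<subseteq> carrier F" "inj_on pt {..<n}"
    using card_le_inj[of "{..<n}" "carrier F"] F by auto
  define T0 where "T0 = {(a, b). a \<le> b \<and> b \<le> d \<and> (a::nat) < k}"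
  define T where "T = {..<\<beta>} \<times> T0"
  have fT0: "finite T0" unfolding T0_def
    by (rule finite_subset[of _ "{..<k} \<times> {..d}"]) auto
  have fT: "finite T" unfolding T_def using fT0 by simp
  have c0: "2 * card T0 + k * k = k * (2 * d + 3)"
    unfolding T0_def using card_T0[of k d] assms(2) by simp
  have "k * (2 * d - k + 3) + k * k = k * (2 * d + 3)"
  proof -
    have "2 * d - k + 3 + k = 2 * d + 3" using assms(2) by simp
    thus ?thesis by (metis add_mult_distrib2)
  qed
  hence "2 * card T0 = k * (2 * d - k + 3)" using c0 by simp
  hence "2 * M = 2 * (\<beta> * card T0)" using assms(5) by simp
  hence "M = card T" unfolding T_def by (simp add: card_cartesian_product)
  then obtain \<phi> where ph: "\<phi> ` {..<M} \<subseteq> T" "inj_on \<phi> {..<M}"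
    using card_le_inj[of "{..<M}" T] fT by auto
  have phT: "s < \<beta> \<and> a \<le> b \<and> b \<le> d \<and> a < k" if "c < M" "\<phi> c = (s, a, b)" for c s a b
  proof -
    have "\<phi> c \<in> T" using ph that by auto
    thus ?thesis using that unfolding T_def T0_def by auto
  qed
  interpret dss F n k d M \<beta> pt \<phi>
  proof (rule dss.intro)
    show "field F" using F by simp
    show "dss_axioms F n k d M \<beta> pt \<phi>"
      by (rule dss_axioms.intro) (use assms(1,2,4) dn pt ph phT in auto)
  qed
  have a1: "\<alpha> = Suc d * \<beta>" using assms(6) by simp
  show "\<exists>N0 R \<sigma>.
              (\<forall>i<n. is_mat F \<alpha> M (N0 i)) \<and> is_mat F \<alpha>' M R \<and>
              (\<forall>es e. valid_event n d e \<longrightarrow> coeffs_ok F \<alpha> \<alpha>' \<beta> (snd e) (\<sigma> es e)) \<and>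
              (\<forall>es. list_all (valid_event n d) es \<longrightarrow>
                 (\<forall>K. K \<subseteq> {..<n} \<and> card K = k \<longrightarrow>
                    recovers F M \<alpha> (run F \<alpha> \<alpha>' \<beta> N0 R \<sigma> es) K))"
    unfolding a1 assms(7) by (rule dss_main)
qed

end
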